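(* Fix $\kappa>0$ and $0<L<U<\infty$; let $a=(1+U)^{-1}$, $b=(1+L)^{-1}$, $I=[a,b]$, $z_0=(a+b)/2$, $\Delta=(b-a)/2$. For a measurable $\psi:[0,\infty)\to\mathbb R$ with $\|\psi\|_\infty\le1$, let $T_\psi(z)=\int_0^\infty\psi(\theta)\frac{\theta^{\kappa-1}}{\Gamma(\kappa)}\left(\frac{1-z}{z}\right)^\kappa e^{-\theta(1-z)/z}d\theta$ for $z\in I$, $R_\psi(z)=(1-z)^{-\kappa}T_\psi(z)$, and $q_\psi(u)=R_\psi(z_0+\Delta u)$ for $u\in[-1,1]$. Then for every integer $r\ge0$, $$\sup_{u\in[-1,1]}|q_\psi^{(r)}(u)|\le a^{-\kappa}L^{-\kappa}A^r\frac{\Gamma(r+\kappa)}{\Gamma(\kappa)},$$ where $A=\Delta a^{-1}\big(1+1/(aL)\big)>0$.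
   Context: $q_\psi^{(r)}$ denotes the $r$-th derivative; $\|\psi\|_\infty$ is the supremum norm. *)

theory Defs
  imports "HOL-Analysis.Analysis"
begin

definition T_psi :: "real \<Rightarrow> (real \<Rightarrow> real) \<Rightarrow> real \<Rightarrow> real" where
  "T_psi \<kappa> \<psi> z =
     (LINT \<theta>:{0..}|lborel. \<psi> \<theta> * (\<theta> powr (\<kappa> - 1) / Gamma \<kappa>)
        * ((1 - z) / z) powr \<kappa> * exp (- \<theta> * (1 - z) / z))"

definition R_psi :: "real \<Rightarrow> (real \<Rightarrow> real) \<Rightarrow> real \<Rightarrow> real" where
  "R_psi \<kappa> \<psi> z = (1 - z) powr (- \<kappa>) * T_psi \<kappa> \<psi> z"

definition q_psi :: "real \<Rightarrow> real \<Rightarrow> real \<Rightarrow> (real \<Rightarrow> real) \<Rightarrow> real \<Rightarrow> real" where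
  "q_psi \<kappa> L U \<psi> u =
     (let a = 1 / (1 + U); b = 1 / (1 + L); z0 = (a + b) / 2; \<Delta> = (b - a) / 2
      in R_psi \<kappa> \<psi> (z0 + \<Delta> * u))"

end

theory Submission
  imports Defs
begin

lemma gamma_std:
  assumes p: "p > (0::real)"
  shows "set_integrable lborel {0..} (\<lambda>t. t powr (p-1) / exp t)"
    and "(LINT t:{0..}|lborel. t powr (p-1) / exp t) = Gamma p"
proof -
  have hk: "((\<lambda>t. t powr (p - 1) / exp t) has_integral Gamma p) {0..}"
    by (rule Gamma_integral_real[OF p])
  have "(\<lambda>t. t powr (p - 1) / exp t) absolutely_integrable_on {0..}"
    by (rule nonnegative_absolutely_integrable_1) (use hk in auto)
  then have "set_integrable lebesgue {0..} (\<lambda>t. t powr (p - 1) / exp t)"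
    by (simp add: absolutely_integrable_on_def)
  then show si: "set_integrable lborel {0..} (\<lambda>t. t powr (p-1) / exp t)"
    unfolding set_integrable_def
    by (subst (asm) integrable_completion) auto
  show "(LINT t:{0..}|lborel. t powr (p-1) / exp t) = Gamma p"
    using set_borel_integral_eq_integral(2)[OF si] hk by (simp add: integral_unique)
qed

lemma gamma_scaled:
  assumes p: "p > (0::real)" and c: "c > 0"
  shows "set_integrable lborel {0..} (\<lambda>t. t powr (p-1) * exp (- c * t))"
    and "(LINT t:{0..}|lborel. t powr (p-1) * exp (- c * t)) = Gamma p * c powr (- p)"
proof -
  define f where "f = (\<lambda>t::real. indicator {0..} t *\<^sub>R (t powr (p-1) / exp t))"
  have fi: "integrable lborel f" using gamma_std(1)[OF p] unfolding f_def set_integrable_def .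
  have fI: "integral\<^sup>L lborel f = Gamma p" using gamma_std(2)[OF p] unfolding f_def set_lebesgue_integral_def .
  have eq: "f (0 + c * x) = c powr (p - 1) * (indicator {0..} x *\<^sub>R (x powr (p-1) * exp (- c * x)))" for x
  proof (cases "x \<ge> 0")
    case True
    then show ?thesis using c by (simp add: f_def powr_mult exp_minus field_simps indicator_def)
  next
    case False
    then have "\<not> 0 \<le> c * x" using c by (simp add: zero_le_mult_iff)
    then show ?thesis using False by (simp add: f_def indicator_def)
  qed
  have eq2: "(\<lambda>x. f (0 + c * x)) = (\<lambda>x. c powr (p - 1) * (indicator {0..} x *\<^sub>R (x powr (p-1) * exp (- c * x))))"
    using eq by auto
  have "integrable lborel (\<lambda>x. f (0 + c * x))"
    by (rule lborel_integrable_real_affine[OF fi]) (use c in auto)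
  then have "integrable lborel (\<lambda>x. c powr (p - 1) * (indicator {0..} x *\<^sub>R (x powr (p-1) * exp (- c * x))))"
    by (simp only: eq)
  then show si: "set_integrable lborel {0..} (\<lambda>t. t powr (p-1) * exp (- c * t))"
    unfolding set_integrable_def using c by simp
  have "Gamma p = \<bar>c\<bar> *\<^sub>R (\<integral>x. f (0 + c * x) \<partial>lborel)"
    using fI lborel_integral_real_affine[of c f 0] c by simp
  also have "\<dots> = c * c powr (p - 1) * (LINT t:{0..}|lborel. t powr (p-1) * exp (- c * t))"
    using c unfolding eq2 by (simp add: set_lebesgue_integral_def)
  also have "c * c powr (p - 1) = c powr p" using c by (simp add: powr_diff)
  finally show "(LINT t:{0..}|lborel. t powr (p-1) * exp (- c * t)) = Gamma p * c powr (- p)"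
    using c by (simp add: powr_minus field_simps)
qed

lemma deriv_under_integral:
  fixes f f' :: "real \<Rightarrow> 'a \<Rightarrow> real" and w :: "'a \<Rightarrow> real"
  assumes d: "\<delta> > 0"
    and int: "\<And>x. x \<in> ball x0 \<delta> \<Longrightarrow> integrable M (f x)"
    and der: "\<And>x \<theta>. x \<in> ball x0 \<delta> \<Longrightarrow> \<theta> \<in> space M \<Longrightarrow> ((\<lambda>x. f x \<theta>) has_real_derivative f' x \<theta>) (at x)"
    and bnd: "\<And>x \<theta>. x \<in> ball x0 \<delta> \<Longrightarrow> \<theta> \<in> space M \<Longrightarrow> \<bar>f' x \<theta>\<bar> \<le> w \<theta>"
    and wi: "integrable M w"
    and fm: "f' x0 \<in> borel_measurable M"
  shows "((\<lambda>x. integral\<^sup>L M (f x)) has_real_derivative integral\<^sup>L M (f' x0)) (at x0)"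
proof -
  have "((\<lambda>h. (integral\<^sup>L M (f (x0+h)) - integral\<^sup>L M (f x0)) / h) \<longlongrightarrow> integral\<^sup>L M (f' x0)) (at 0)"
    unfolding tendsto_at_iff_sequentially
  proof (intro allI impI)
    fix X :: "nat \<Rightarrow> real" assume X0: "\<forall>i. X i \<in> UNIV - {0}" and Xl: "X \<longlonglongrightarrow> 0"
    from Xl d obtain N where N: "\<And>n. n \<ge> N \<Longrightarrow> norm (X n - 0) < \<delta>"
      unfolding LIMSEQ_iff by blast
    have inb: "x0 + X (n+N) \<in> ball x0 \<delta>" for n
      using N[of "n+N"] by (simp add: dist_norm)
    have Xn0: "X (n+N) \<noteq> 0" for n using X0 by auto
    define s where "s n \<theta> = (f (x0 + X (n+N)) \<theta> - f x0 \<theta>) / X (n+N)" for n \<theta>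
    have x0b: "x0 \<in> ball x0 \<delta>" using d by simp
    have "(\<lambda>n. integral\<^sup>L M (s n)) \<longlonglongrightarrow> integral\<^sup>L M (f' x0)"
    proof (rule integral_dominated_convergence[where w=w])
      show "f' x0 \<in> borel_measurable M" by fact
      show "s n \<in> borel_measurable M" for n
        unfolding s_def using int[OF inb[of n]] int[OF x0b]
        by (intro borel_measurable_divide borel_measurable_diff borel_measurable_const)
           (auto dest: borel_measurable_integrable)
      show "integrable M w" by fact
      show "AE \<theta> in M. (\<lambda>n. s n \<theta>) \<longlonglongrightarrow> f' x0 \<theta>"
      proof (rule AE_I2)
        fix \<theta> assume th: "\<theta> \<in> space M"
        have "((\<lambda>h. (f (x0 + h) \<theta> - f x0 \<theta>) / h) \<longlongrightarrow> f' x0 \<theta>) (at 0)"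
          using der[OF x0b th] by (simp add: DERIV_def)
        then have H: "\<forall>Y. (\<forall>i. Y i \<in> UNIV - {0}) \<longrightarrow> Y \<longlonglongrightarrow> 0 \<longrightarrow> ((\<lambda>h. (f (x0 + h) \<theta> - f x0 \<theta>) / h) \<circ> Y) \<longlonglongrightarrow> f' x0 \<theta>"
          unfolding tendsto_at_iff_sequentially .
        have Y1: "\<forall>i. X (i+N) \<in> UNIV - {0}" using X0 by auto
        have Y2: "(\<lambda>i. X (i+N)) \<longlonglongrightarrow> 0" using LIMSEQ_ignore_initial_segment[OF Xl] .
        have "((\<lambda>h. (f (x0 + h) \<theta> - f x0 \<theta>) / h) \<circ> (\<lambda>i. X (i+N))) \<longlonglongrightarrow> f' x0 \<theta>"
          using Y1 Y2 by (intro H[rule_format]) auto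
        then show "(\<lambda>n. s n \<theta>) \<longlonglongrightarrow> f' x0 \<theta>" by (simp add: s_def o_def)
      qed
      show "AE \<theta> in M. norm (s n \<theta>) \<le> w \<theta>" for n
      proof (rule AE_I2)
        fix \<theta> assume th: "\<theta> \<in> space M"
        have "norm (f (x0 + X (n+N)) \<theta> - f x0 \<theta>) \<le> w \<theta> * norm ((x0 + X (n+N)) - x0)"
        proof (rule field_differentiable_bound[where S="ball x0 \<delta>" and f'="\<lambda>x. f' x \<theta>"])
          show "convex (ball x0 \<delta>)" by simp
          show "((\<lambda>x. f x \<theta>) has_field_derivative f' x \<theta>) (at x within ball x0 \<delta>)" if "x \<in> ball x0 \<delta>" for x
            using der[OF that th] by (rule has_field_derivative_at_within)
          show "norm (f' x \<theta>) \<le> w \<theta>" if "x \<in> ball x0 \<delta>" for x using bnd[OF that th] by simp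
        qed (use inb x0b in auto)
        then show "norm (s n \<theta>) \<le> w \<theta>"
          using Xn0[of n] by (simp add: s_def divide_le_eq abs_mult mult.commute)
      qed
    qed
    moreover have "integral\<^sup>L M (s n) = (integral\<^sup>L M (f (x0 + X (n+N))) - integral\<^sup>L M (f x0)) / X (n+N)" for n
      unfolding s_def using int[OF inb[of n]] int[OF x0b] by simp
    ultimately have "(\<lambda>n. (integral\<^sup>L M (f (x0 + X (n+N))) - integral\<^sup>L M (f x0)) / X (n+N)) \<longlonglongrightarrow> integral\<^sup>L M (f' x0)"
      by simp
    then show "((\<lambda>h. (integral\<^sup>L M (f (x0+h)) - integral\<^sup>L M (f x0)) / h) \<circ> X) \<longlonglongrightarrow> integral\<^sup>L M (f' x0)"
      unfolding o_def by (rule LIMSEQ_offset)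
  qed
  then show ?thesis by (simp add: DERIV_def)
qed

lemma psi_meas:
  assumes "set_borel_measurable lborel {0..} (\<psi>::real\<Rightarrow>real)" "h \<in> borel_measurable borel"
  shows "set_borel_measurable lborel {0..} (\<lambda>\<theta>. \<psi> \<theta> * h \<theta>)"
proof -
  have "(\<lambda>\<theta>. (indicator {0..} \<theta> *\<^sub>R \<psi> \<theta>) * h \<theta>) \<in> borel_measurable lborel"
    using assms unfolding set_borel_measurable_def by measurable
  then show ?thesis unfolding set_borel_measurable_def by (simp add: mult.assoc)
qed

lemma kern_meas: "(\<lambda>\<theta>::real. \<theta> powr (\<kappa>-1) * \<theta>^m * exp (-\<theta>*(1-z)/z)) \<in> borel_measurable borel"
  by measurable

lemma pw: "(\<theta>::real) \<ge> 0 \<Longrightarrow> \<theta> powr (\<kappa>-1) * \<theta>^m = \<theta> powr (\<kappa> + real m - 1)"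
  by (cases "\<theta> = 0") (auto simp: powr_realpow[symmetric] powr_add[symmetric] algebra_simps)

definition Jf :: "real \<Rightarrow> (real \<Rightarrow> real) \<Rightarrow> nat \<Rightarrow> real \<Rightarrow> real" where
  "Jf \<kappa> \<psi> m z = (LINT \<theta>:{0..}|lborel. \<psi> \<theta> * \<theta> powr (\<kappa>-1) * \<theta>^m * exp (-\<theta>*(1-z)/z))"

lemma J_int_bound:
  assumes k: "\<kappa> > 0" and pm: "set_borel_measurable lborel {0..} \<psi>"
    and pb: "\<forall>\<theta>\<ge>0. \<bar>\<psi> \<theta>\<bar> \<le> 1"
    and z: "0 < z" "z < 1"
  shows "set_integrable lborel {0..} (\<lambda>\<theta>. \<psi> \<theta> * \<theta> powr (\<kappa>-1) * \<theta>^m * exp (-\<theta>*(1-z)/z))"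
    and "\<bar>Jf \<kappa> \<psi> m z\<bar> \<le> Gamma (\<kappa> + real m) * ((1-z)/z) powr (-(\<kappa> + real m))"
proof -
  define s where "s = (1-z)/z"
  have s: "s > 0" using z by (simp add: s_def)
  have p: "\<kappa> + real m > 0" using k by simp
  note G = gamma_scaled[OF p s]
  have e: "- \<theta> * (1 - z) / z = - s * \<theta>" for \<theta> by (simp add: s_def)
  have bd: "\<bar>\<psi> \<theta> * \<theta> powr (\<kappa>-1) * \<theta>^m * exp (-\<theta>*(1-z)/z)\<bar> \<le> \<theta> powr (\<kappa> + real m - 1) * exp (- s * \<theta>)"
    if "\<theta> \<in> {0..}" for \<theta>
  proof -
    have t: "\<theta> \<ge> 0" using that by simp
    have "\<bar>\<psi> \<theta> * \<theta> powr (\<kappa>-1) * \<theta>^m * exp (-\<theta>*(1-z)/z)\<bar> = \<bar>\<psi> \<theta>\<bar> * (\<theta> powr (\<kappa> + real m - 1) * exp (- s * \<theta>))"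
      unfolding e using t by (simp add: abs_mult pw[OF t, symmetric] mult.assoc)
    also have "\<dots> \<le> 1 * (\<theta> powr (\<kappa> + real m - 1) * exp (- s * \<theta>))"
      using pb t by (intro mult_right_mono) auto
    finally show ?thesis by simp
  qed
  have mb: "set_borel_measurable lborel {0..} (\<lambda>\<theta>. \<psi> \<theta> * (\<theta> powr (\<kappa>-1) * \<theta>^m * exp (-\<theta>*(1-z)/z)))"
    by (rule psi_meas[OF pm kern_meas])
  show si: "set_integrable lborel {0..} (\<lambda>\<theta>. \<psi> \<theta> * \<theta> powr (\<kappa>-1) * \<theta>^m * exp (-\<theta>*(1-z)/z))"
  proof (rule set_integrable_bound[OF G(1)])
    show "set_borel_measurable lborel {0..} (\<lambda>\<theta>. \<psi> \<theta> * \<theta> powr (\<kappa>-1) * \<theta>^m * exp (-\<theta>*(1-z)/z))"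
      using mb by (simp add: mult.assoc)
    show "AE \<theta> in lborel. \<theta> \<in> {0..} \<longrightarrow> norm (\<psi> \<theta> * \<theta> powr (\<kappa>-1) * \<theta>^m * exp (-\<theta>*(1-z)/z)) \<le> norm (\<theta> powr (\<kappa> + real m - 1) * exp (- s * \<theta>))"
      using bd by (intro AE_I2) auto
  qed
  have "\<bar>Jf \<kappa> \<psi> m z\<bar> \<le> (LINT \<theta>:{0..}|lborel. norm (\<psi> \<theta> * \<theta> powr (\<kappa>-1) * \<theta>^m * exp (-\<theta>*(1-z)/z)))"
    unfolding Jf_def using set_integral_norm_bound[OF si] by simp
  also have "\<dots> \<le> (LINT \<theta>:{0..}|lborel. \<theta> powr (\<kappa> + real m - 1) * exp (- s * \<theta>))"
    using bd set_integrable_abs[OF si] G(1) by (intro set_integral_mono) auto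
  also have "\<dots> = Gamma (\<kappa> + real m) * s powr (-(\<kappa> + real m))" by (rule G(2))
  finally show "\<bar>Jf \<kappa> \<psi> m z\<bar> \<le> Gamma (\<kappa> + real m) * ((1-z)/z) powr (-(\<kappa> + real m))"
    by (simp add: s_def)
qed

lemma J_deriv:
  assumes k: "\<kappa> > 0" and pm: "set_borel_measurable lborel {0..} \<psi>"
    and pb: "\<forall>\<theta>\<ge>0. \<bar>\<psi> \<theta>\<bar> \<le> 1"
    and z: "0 < z0" "z0 < 1"
  shows "(Jf \<kappa> \<psi> m has_real_derivative Jf \<kappa> \<psi> (Suc m) z0 / z0^2) (at z0)"
proof -
  define \<delta> where "\<delta> = min z0 (1-z0) / 2"
  define xmin where "xmin = z0/2"
  define xmax where "xmax = (1+z0)/2"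
  define s1 where "s1 = (1-xmax)/xmax"
  have d: "\<delta> > 0" using z by (simp add: \<delta>_def)
  have xm: "0 < xmin" "xmax < 1" "0 < xmax" using z by (auto simp: xmin_def xmax_def)
  have s1: "s1 > 0" using xm by (simp add: s1_def)
  have inb: "xmin < x" "x < xmax" if "x \<in> ball z0 \<delta>" for x
  proof -
    have "\<bar>z0 - x\<bar> < \<delta>" using that by (simp add: dist_real_def)
    moreover have "\<delta> \<le> z0/2" "\<delta> \<le> (1-z0)/2" by (auto simp: \<delta>_def)
    ultimately show "xmin < x" "x < xmax" unfolding xmin_def xmax_def by (auto simp: abs_less_iff)
  qed
  define g where "g n x \<theta> = \<psi> \<theta> * \<theta> powr (\<kappa>-1) * \<theta>^n * exp (-\<theta>*(1-x)/x)" for n x \<theta>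
  define f where "f x \<theta> = indicator {0..} \<theta> * g m x \<theta>" for x \<theta>
  define f' where "f' x \<theta> = indicator {0..} \<theta> * ((1/x^2) * g (Suc m) x \<theta>)" for x \<theta>
  define w where "w \<theta> = (1/xmin^2) * (indicator {0..} \<theta> * (\<theta> powr (\<kappa> + real (Suc m) - 1) * exp (- s1 * \<theta>)))" for \<theta>
  have p: "\<kappa> + real (Suc m) > 0" using k by simp
  have "((\<lambda>x. integral\<^sup>L lborel (f x)) has_real_derivative integral\<^sup>L lborel (f' z0)) (at z0)"
  proof (rule deriv_under_integral[OF d])
    show "integrable lborel (f x)" if "x \<in> ball z0 \<delta>" for x
      using J_int_bound(1)[OF k pm pb, of x m] inb[OF that] xm
      unfolding set_integrable_def f_def g_def by simp
    show "((\<lambda>x. f x \<theta>) has_real_derivative f' x \<theta>) (at x)" if "x \<in> ball z0 \<delta>" for x \<theta>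
    proof -
      have x: "x > 0" using inb[OF that] xm by simp
      have "((\<lambda>x. exp (-\<theta>*(1-x)/x)) has_real_derivative exp (-\<theta>*(1-x)/x) * (\<theta>/x^2)) (at x)"
        using x by (auto intro!: derivative_eq_intros simp: field_simps power2_eq_square)
      then have "((\<lambda>x. indicator {0..} \<theta> * (\<psi> \<theta> * \<theta> powr (\<kappa>-1) * \<theta>^m) * exp (-\<theta>*(1-x)/x)) has_real_derivative
          indicator {0..} \<theta> * (\<psi> \<theta> * \<theta> powr (\<kappa>-1) * \<theta>^m) * (exp (-\<theta>*(1-x)/x) * (\<theta>/x^2))) (at x)"
        by (rule DERIV_cmult)
      then show ?thesis unfolding f_def f'_def g_def
        by (simp add: algebra_simps)
    qed
    show "\<bar>f' x \<theta>\<bar> \<le> w \<theta>" if "x \<in> ball z0 \<delta>" for x \<theta>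
    proof (cases "\<theta> \<ge> 0")
      case False then show ?thesis by (simp add: f'_def w_def)
    next
      case t: True
      have x: "xmin < x" "x < xmax" using inb[OF that] by auto
      have "(1-xmax)/xmax \<le> (1-x)/x" using x xm by (simp add: field_simps)
      then have "s1 * \<theta> \<le> \<theta> * (1-x)/x" using t unfolding s1_def
        by (metis mult.commute mult_left_mono times_divide_eq_right)
      then have e: "exp (-\<theta>*(1-x)/x) \<le> exp (- s1 * \<theta>)" by simp
      have ix: "1/x^2 \<le> 1/xmin^2" using x xm by (intro divide_left_mono power_mono) auto
      have "\<bar>f' x \<theta>\<bar> = (1/x^2) * (\<bar>\<psi> \<theta>\<bar> * (\<theta> powr (\<kappa> + real (Suc m) - 1) * exp (-\<theta>*(1-x)/x)))"
      proof -
        have pw': "\<theta> powr (\<kappa> - 1) * (\<theta> * \<theta> ^ m) = \<theta> powr (\<kappa> + real m)"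
          using pw[OF t, of \<kappa> "Suc m"] by simp
        show ?thesis using t x xm unfolding f'_def g_def
          by (simp add: abs_mult pw' mult.assoc)
      qed
      also have "\<dots> \<le> (1/xmin^2) * (1 * (\<theta> powr (\<kappa> + real (Suc m) - 1) * exp (- s1 * \<theta>)))"
        using pb t ix e
        by (intro mult_mono mult_nonneg_nonneg) auto
      finally show ?thesis using t by (simp add: w_def)
    qed
    show "integrable lborel w"
      using gamma_scaled(1)[OF p s1] unfolding set_integrable_def w_def by simp
    show "f' z0 \<in> borel_measurable lborel"
    proof -
      have "set_borel_measurable lborel {0..} (\<lambda>\<theta>. \<psi> \<theta> * ((1/z0^2) * (\<theta> powr (\<kappa>-1) * \<theta>^Suc m * exp (-\<theta>*(1-z0)/z0))))"
        by (rule psi_meas[OF pm]) measurable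
      then show ?thesis unfolding set_borel_measurable_def f'_def g_def
        by (simp add: algebra_simps)
    qed
  qed
  moreover have "integral\<^sup>L lborel (f x) = Jf \<kappa> \<psi> m x" for x
    unfolding f_def g_def Jf_def set_lebesgue_integral_def by simp
  moreover have "integral\<^sup>L lborel (f' z0) = Jf \<kappa> \<psi> (Suc m) z0 / z0^2"
  proof -
    have "integral\<^sup>L lborel (f' z0) = (1/z0^2) * integral\<^sup>L lborel (\<lambda>\<theta>. indicator {0..} \<theta> * g (Suc m) z0 \<theta>)"
      unfolding f'_def by (simp add: mult.left_commute[of "indicator _ _"])
    then show ?thesis unfolding Jf_def g_def set_lebesgue_integral_def by simp
  qed
  ultimately show ?thesis by simp
qed

fun acoef :: "real \<Rightarrow> nat \<Rightarrow> nat \<Rightarrow> real" where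
  "acoef \<kappa> 0 m = (if m = 0 then 1 else 0)"
| "acoef \<kappa> (Suc r) m = - (\<kappa> + real r + real m) * acoef \<kappa> r m + (if m = 0 then 0 else acoef \<kappa> r (m - 1))"

lemma acoef_zero: "r < m \<Longrightarrow> acoef \<kappa> r m = 0"
  by (induction r arbitrary: m) auto

definition gR :: "real \<Rightarrow> (real \<Rightarrow> real) \<Rightarrow> nat \<Rightarrow> real \<Rightarrow> real" where
  "gR \<kappa> \<psi> r z = (\<Sum>m\<le>r. acoef \<kappa> r m * (z powr (- \<kappa> - real r - real m) * Jf \<kappa> \<psi> m z))"

lemma gR_deriv:
  assumes k: "\<kappa> > 0" and pm: "set_borel_measurable lborel {0..} \<psi>"
    and pb: "\<forall>\<theta>\<ge>0. \<bar>\<psi> \<theta>\<bar> \<le> 1"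
    and z: "0 < z" "z < 1"
  shows "(gR \<kappa> \<psi> r has_real_derivative gR \<kappa> \<psi> (Suc r) z) (at z)"
proof -
  define P where "P m = z powr (- \<kappa> - real (Suc r) - real m) * Jf \<kappa> \<psi> m z" for m
  have trm: "((\<lambda>z. z powr (- \<kappa> - real r - real m) * Jf \<kappa> \<psi> m z) has_real_derivative
      (- (\<kappa> + real r + real m) * P m + P (Suc m))) (at z)" for m
  proof -
    have "((\<lambda>z. z powr (- \<kappa> - real r - real m) * Jf \<kappa> \<psi> m z) has_real_derivative
      ((- \<kappa> - real r - real m) * z powr (- \<kappa> - real r - real m - 1) * Jf \<kappa> \<psi> m z
        + z powr (- \<kappa> - real r - real m) * (Jf \<kappa> \<psi> (Suc m) z / z^2))) (at z)"
    proof -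
      have d1: "((\<lambda>z. z powr (- \<kappa> - real r - real m)) has_real_derivative (- \<kappa> - real r - real m) * z powr (- \<kappa> - real r - real m - 1)) (at z)"
        using z by (intro derivative_eq_intros) auto
      from DERIV_mult[OF d1 J_deriv[OF k pm pb z, of m]] show ?thesis by (simp add: algebra_simps)
    qed
    moreover have "z powr (- \<kappa> - real r - real m) * (Jf \<kappa> \<psi> (Suc m) z / z^2) = P (Suc m)"
    proof -
      have "z powr (- \<kappa> - real r - real m) / z^2 = z powr (- \<kappa> - real (Suc r) - real (Suc m))"
      proof -
        have "z^2 = z powr 2" using z by (simp add: powr_numeral)
        then have "z powr (- \<kappa> - real r - real m) / z^2 = z powr (- \<kappa> - real r - real m - 2)"
          by (simp add: powr_diff)
        also have "- \<kappa> - real r - real m - 2 = - \<kappa> - real (Suc r) - real (Suc m)" by simp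
        finally show ?thesis .
      qed
      then show ?thesis unfolding P_def by (metis times_divide_eq_right mult.commute)
    qed
    moreover have "(- \<kappa> - real r - real m) * z powr (- \<kappa> - real r - real m - 1) * Jf \<kappa> \<psi> m z = - (\<kappa> + real r + real m) * P m"
      unfolding P_def by (simp add: algebra_simps)
    ultimately show ?thesis by simp
  qed
  have "(gR \<kappa> \<psi> r has_real_derivative (\<Sum>m\<le>r. acoef \<kappa> r m * (- (\<kappa> + real r + real m) * P m + P (Suc m)))) (at z)"
    unfolding gR_def by (intro DERIV_sum DERIV_cmult trm)
  moreover have "(\<Sum>m\<le>r. acoef \<kappa> r m * (- (\<kappa> + real r + real m) * P m + P (Suc m))) = gR \<kappa> \<psi> (Suc r) z"
  proof -
    have A: "(\<Sum>m\<le>Suc r. - (\<kappa> + real r + real m) * acoef \<kappa> r m * P m) = (\<Sum>m\<le>r. - (\<kappa> + real r + real m) * acoef \<kappa> r m * P m)"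
      by (simp add: acoef_zero)
    have B: "(\<Sum>m\<le>Suc r. (if m = 0 then 0 else acoef \<kappa> r (m - 1)) * P m) = (\<Sum>m\<le>r. acoef \<kappa> r m * P (Suc m))"
      by (subst sum.atMost_Suc_shift) simp
    have "gR \<kappa> \<psi> (Suc r) z = (\<Sum>m\<le>Suc r. acoef \<kappa> (Suc r) m * P m)"
      unfolding gR_def P_def by simp
    also have "\<dots> = (\<Sum>m\<le>Suc r. - (\<kappa> + real r + real m) * acoef \<kappa> r m * P m) + (\<Sum>m\<le>Suc r. (if m = 0 then 0 else acoef \<kappa> r (m - 1)) * P m)"
      by (subst sum.distrib[symmetric], rule sum.cong) (auto simp: algebra_simps)
    also have "\<dots> = (\<Sum>m\<le>r. acoef \<kappa> r m * (- (\<kappa> + real r + real m) * P m + P (Suc m)))"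
      unfolding A B by (subst sum.distrib[symmetric], rule sum.cong) (auto simp: algebra_simps)
    finally show ?thesis by simp
  qed
  ultimately show ?thesis by simp
qed

definition bcoef :: "real \<Rightarrow> nat \<Rightarrow> nat \<Rightarrow> real" where
  "bcoef \<kappa> r m = pochhammer \<kappa> r * real (r choose m) / pochhammer \<kappa> m"

lemma binom_id: "real (Suc j) * real (r choose Suc j) = (real r - real j) * real (r choose j)"
proof (cases "j \<le> r")
  case True
  have "Suc j * (r choose Suc j) = (r - j) * (r choose j)"
    using binomial_absorption[of j r] binomial_absorb_comp[of r j] by simp
  then have "real (Suc j * (r choose Suc j)) = real ((r - j) * (r choose j))" by simp
  then show ?thesis using True by (simp only: of_nat_mult of_nat_diff)
next
  case False
  then show ?thesis by (simp add: binomial_eq_0)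
qed

lemma bcoef_rec:
  assumes k: "\<kappa> > 0"
  shows "bcoef \<kappa> (Suc r) m = (\<kappa> + real r + real m) * bcoef \<kappa> r m + (if m = 0 then 0 else bcoef \<kappa> r (m - 1))"
proof (cases m)
  case 0
  then show ?thesis by (simp add: bcoef_def pochhammer_Suc)
next
  case (Suc j)
  define P where "P = pochhammer \<kappa> r"
  define Q where "Q = pochhammer \<kappa> j"
  define c1 where "c1 = real (r choose Suc j)"
  define c0 where "c0 = real (r choose j)"
  have Q: "Q > 0" using pochhammer_pos[OF k] by (simp add: Q_def)
  have kj: "\<kappa> + real j > 0" using k by simp
  have id: "real (Suc j) * c1 = (real r - real j) * c0" unfolding c1_def c0_def by (rule binom_id)
  have lhs: "bcoef \<kappa> (Suc r) m = P * (\<kappa> + real r) * (c1 + c0) / (Q * (\<kappa> + real j))"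
    unfolding bcoef_def Suc P_def Q_def c1_def c0_def by (simp add: pochhammer_Suc)
  have rhs: "(\<kappa> + real r + real m) * bcoef \<kappa> r m + (if m = 0 then 0 else bcoef \<kappa> r (m - 1))
      = (\<kappa> + real r + real (Suc j)) * (P * c1 / (Q * (\<kappa> + real j))) + P * c0 / Q"
    unfolding bcoef_def Suc P_def Q_def c1_def c0_def by (simp add: pochhammer_Suc)
  have "(\<kappa> + real r + real (Suc j)) * (P * c1 / (Q * (\<kappa> + real j))) + P * c0 / Q
      = P * ((\<kappa> + real r + real (Suc j)) * c1 + (\<kappa> + real j) * c0) / (Q * (\<kappa> + real j))"
  proof -
    have e1: "(\<kappa> + real r + real (Suc j)) * (P * c1 / (Q * (\<kappa> + real j))) = P * ((\<kappa> + real r + real (Suc j)) * c1) / (Q * (\<kappa> + real j))"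
      by simp
    have e2: "P * c0 / Q = P * ((\<kappa> + real j) * c0) / (Q * (\<kappa> + real j))"
      using kj by simp
    show ?thesis unfolding e1 e2 add_divide_distrib[symmetric] by (metis distrib_left)
  qed
  also have "(\<kappa> + real r + real (Suc j)) * c1 + (\<kappa> + real j) * c0 = (\<kappa> + real r) * (c1 + c0)"
    using id by (simp add: algebra_simps)
  finally show ?thesis using lhs rhs by (simp add: mult.assoc)
qed

lemma acoef_bound:
  assumes k: "\<kappa> > 0"
  shows "\<bar>acoef \<kappa> r m\<bar> \<le> bcoef \<kappa> r m"
proof (induction r arbitrary: m)
  case 0
  then show ?case by (cases m) (simp_all add: bcoef_def)
next
  case (Suc r)
  have "\<bar>acoef \<kappa> (Suc r) m\<bar> \<le> (\<kappa> + real r + real m) * \<bar>acoef \<kappa> r m\<bar> + (if m = 0 then 0 else \<bar>acoef \<kappa> r (m - 1)\<bar>)"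
  proof -
    have c: "\<kappa> + real r + real m \<ge> 0" using k by simp
    have "\<bar>acoef \<kappa> (Suc r) m\<bar> \<le> \<bar>- (\<kappa> + real r + real m) * acoef \<kappa> r m\<bar> + \<bar>if m = 0 then 0 else acoef \<kappa> r (m - 1)\<bar>"
      unfolding acoef.simps by (rule abs_triangle_ineq)
    also have "\<dots> = (\<kappa> + real r + real m) * \<bar>acoef \<kappa> r m\<bar> + (if m = 0 then 0 else \<bar>acoef \<kappa> r (m - 1)\<bar>)"
      using c by (simp add: abs_mult)
    finally show ?thesis .
  qed
  also have "\<dots> \<le> (\<kappa> + real r + real m) * bcoef \<kappa> r m + (if m = 0 then 0 else bcoef \<kappa> r (m - 1))"
    using k Suc.IH by (intro add_mono mult_left_mono) auto
  also have "\<dots> = bcoef \<kappa> (Suc r) m" using bcoef_rec[OF k] by simp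
  finally show ?case .
qed

lemma powr_ident:
  assumes z: "0 < z" "z < (1::real)"
  shows "z powr (- \<kappa> - real r - real m) * ((1-z)/z) powr (-(\<kappa> + real m))
     = z powr (- real r) * (1-z) powr (-\<kappa>) * (1/(1-z))^m"
proof -
  have z1: "1 - z > 0" using z by simp
  have "((1-z)/z) powr (-(\<kappa> + real m)) = (1-z) powr (-(\<kappa> + real m)) / z powr (-(\<kappa> + real m))"
    using z z1 by (simp add: powr_divide)
  note A = this
  have B: "z powr (- \<kappa> - real r - real m) / z powr (-(\<kappa> + real m)) = z powr (- real r)"
    by (simp add: powr_diff[symmetric])
  have Cc: "(1-z) powr (-(\<kappa> + real m)) = (1-z) powr (-\<kappa>) * (1/(1-z))^m"
  proof -
    have "(1-z) powr (-(\<kappa> + real m)) = (1-z) powr (-\<kappa>) * (1-z) powr (- real m)"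
      by (simp add: powr_add[symmetric])
    also have "(1-z) powr (- real m) = (1/(1-z))^m"
      using z1 by (simp add: powr_minus powr_realpow power_one_over inverse_eq_divide)
    finally show ?thesis .
  qed
  have "z powr (- \<kappa> - real r - real m) * ((1-z)/z) powr (-(\<kappa> + real m))
    = (z powr (- \<kappa> - real r - real m) / z powr (-(\<kappa> + real m))) * (1-z) powr (-(\<kappa> + real m))"
    unfolding A by simp
  also have "\<dots> = z powr (- real r) * ((1-z) powr (-\<kappa>) * (1/(1-z))^m)" unfolding B Cc ..
  finally show ?thesis by (simp only: mult.assoc)
qed

lemma gR_bound:
  assumes k: "\<kappa> > 0" and pm: "set_borel_measurable lborel {0..} \<psi>"
    and pb: "\<forall>\<theta>\<ge>0. \<bar>\<psi> \<theta>\<bar> \<le> 1"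
    and z: "0 < z" "z < 1"
  shows "\<bar>gR \<kappa> \<psi> r z\<bar> \<le> Gamma \<kappa> * pochhammer \<kappa> r * z powr (- real r) * (1-z) powr (-\<kappa>) * (1 + 1/(1-z))^r"
proof -
  have kn: "\<kappa> \<notin> \<int>\<^sub>\<le>\<^sub>0" using k nonpos_Ints_nonpos by fastforce
  have Gk: "Gamma \<kappa> > 0" using k by (rule Gamma_real_pos)
  define C where "C = Gamma \<kappa> * pochhammer \<kappa> r * z powr (- real r) * (1-z) powr (-\<kappa>)"
  have "\<bar>gR \<kappa> \<psi> r z\<bar> \<le> (\<Sum>m\<le>r. \<bar>acoef \<kappa> r m * (z powr (- \<kappa> - real r - real m) * Jf \<kappa> \<psi> m z)\<bar>)"
    unfolding gR_def by (rule sum_abs)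
  also have "\<dots> \<le> (\<Sum>m\<le>r. bcoef \<kappa> r m * (z powr (- \<kappa> - real r - real m) * (Gamma (\<kappa> + real m) * ((1-z)/z) powr (-(\<kappa> + real m)))))"
  proof (rule sum_mono)
    fix m assume "m \<in> {..r}"
    show "\<bar>acoef \<kappa> r m * (z powr (- \<kappa> - real r - real m) * Jf \<kappa> \<psi> m z)\<bar> \<le> bcoef \<kappa> r m * (z powr (- \<kappa> - real r - real m) * (Gamma (\<kappa> + real m) * ((1-z)/z) powr (-(\<kappa> + real m))))"
      unfolding abs_mult
      using acoef_bound[OF k, of r m] J_int_bound(2)[OF k pm pb z, of m]
      by (intro mult_mono) auto
  qed
  also have "\<dots> = (\<Sum>m\<le>r. C * (real (r choose m) * (1/(1-z))^m))"
  proof (rule sum.cong[OF refl])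
    fix m assume "m \<in> {..r}"
    have pm0: "pochhammer \<kappa> m > 0" using pochhammer_pos[OF k] .
    have "Gamma (\<kappa> + real m) = pochhammer \<kappa> m * Gamma \<kappa>"
      using pochhammer_Gamma[OF kn, of m] Gk by simp
    then have E1: "bcoef \<kappa> r m * Gamma (\<kappa> + real m) = Gamma \<kappa> * pochhammer \<kappa> r * real (r choose m)"
      unfolding bcoef_def using pm0 by simp
    note E2 = powr_ident[OF z, of \<kappa> r m]
    show "bcoef \<kappa> r m * (z powr (- \<kappa> - real r - real m) * (Gamma (\<kappa> + real m) * ((1-z)/z) powr (-(\<kappa> + real m)))) = C * (real (r choose m) * (1/(1-z))^m)"
    proof -
      have "bcoef \<kappa> r m * (z powr (- \<kappa> - real r - real m) * (Gamma (\<kappa> + real m) * ((1-z)/z) powr (-(\<kappa> + real m))))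
         = (bcoef \<kappa> r m * Gamma (\<kappa> + real m)) * (z powr (- \<kappa> - real r - real m) * ((1-z)/z) powr (-(\<kappa> + real m)))"
        by (simp only: ac_simps)
      also have "\<dots> = (Gamma \<kappa> * pochhammer \<kappa> r * real (r choose m)) * (z powr (- real r) * (1-z) powr (-\<kappa>) * (1/(1-z))^m)"
        by (simp only: E1 E2)
      also have "\<dots> = C * (real (r choose m) * (1/(1-z))^m)"
        unfolding C_def by (simp only: ac_simps)
      finally show ?thesis .
    qed
  qed
  also have "\<dots> = C * (1/(1-z) + 1)^r"
    by (simp add: sum_distrib_left[symmetric] binomial_ring)
  finally show ?thesis unfolding C_def by (simp add: add.commute)
qed

lemma R_eq:
  assumes z: "0 < z" "z < 1"
  shows "R_psi \<kappa> \<psi> z = gR \<kappa> \<psi> 0 z / Gamma \<kappa>"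
proof -
  define s where "s = (1-z)/z"
  have T: "T_psi \<kappa> \<psi> z = s powr \<kappa> / Gamma \<kappa> * Jf \<kappa> \<psi> 0 z"
  proof -
    have "T_psi \<kappa> \<psi> z = (LINT \<theta>:{0..}|lborel. (s powr \<kappa> / Gamma \<kappa>) * (\<psi> \<theta> * \<theta> powr (\<kappa>-1) * \<theta>^0 * exp (-\<theta>*(1-z)/z)))"
      unfolding T_psi_def s_def by (simp add: ac_simps)
    also have "\<dots> = s powr \<kappa> / Gamma \<kappa> * Jf \<kappa> \<psi> 0 z"
      unfolding Jf_def by (rule set_integral_mult_right)
    finally show ?thesis .
  qed
  have "(1 - z) powr (- \<kappa>) * s powr \<kappa> = z powr (- \<kappa>)"
  proof -
    have "((1-z)/z) powr \<kappa> = (1-z) powr \<kappa> / z powr \<kappa>" using z by (simp add: powr_divide)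
    then show ?thesis unfolding s_def using z by (simp add: powr_minus field_simps)
  qed
  then show ?thesis unfolding R_psi_def T gR_def by simp
qed

lemma main_aux:
  fixes \<kappa> L U :: real and \<psi> :: "real \<Rightarrow> real"
  assumes k: "\<kappa> > 0" and L: "0 < L" and LU: "L < U"
    and pm: "set_borel_measurable lborel {0..} \<psi>"
    and pb: "\<forall>\<theta>\<ge>0. \<bar>\<psi> \<theta>\<bar> \<le> 1"
    and u: "u \<in> {-1..1}"
    and a_def: "a = 1 / (1 + U)" and b_def: "b = 1 / (1 + L)" and D_def: "\<Delta> = (b - a) / 2"
    and A_def: "A = \<Delta> / a * (1 + 1 / (a * L))"
  shows "\<bar>(deriv ^^ r) (q_psi \<kappa> L U \<psi>) u\<bar> \<le> a powr (- \<kappa>) * L powr (- \<kappa>) * A ^ r * Gamma (real r + \<kappa>) / Gamma \<kappa>"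
proof -
  define z0 where "z0 = (a + b) / 2"
  define Z where "Z u = z0 + \<Delta> * u" for u
  have a0: "0 < a" using L LU by (simp add: a_def)
  have ab: "a < b" using L LU by (simp add: a_def b_def divide_strict_left_mono)
  have b1: "b < 1" using L by (simp add: b_def)
  have D0: "\<Delta> > 0" using ab by (simp add: D_def)
  have qeq: "q_psi \<kappa> L U \<psi> v = R_psi \<kappa> \<psi> (Z v)" for v
    by (simp add: q_psi_def Let_def Z_def z0_def D_def a_def b_def)
  define V where "V = {v. 0 < Z v} \<inter> {v. Z v < 1}"
  have oV: "open V" unfolding V_def Z_def
    by (intro open_Int open_Collect_less continuous_intros)
  have key: "\<forall>v\<in>V. (deriv ^^ n) (q_psi \<kappa> L U \<psi>) v = \<Delta>^n * gR \<kappa> \<psi> n (Z v) / Gamma \<kappa>" for n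
  proof (induction n)
    case 0
    show ?case using R_eq by (auto simp: qeq V_def)
  next
    case (Suc n)
    show ?case
    proof
      fix v assume v: "v \<in> V"
      have zv: "0 < Z v" "Z v < 1" using v by (auto simp: V_def)
      have dZ: "(Z has_real_derivative \<Delta>) (at v)"
        unfolding Z_def by (auto intro!: derivative_eq_intros)
      have "((\<lambda>v. gR \<kappa> \<psi> n (Z v)) has_real_derivative gR \<kappa> \<psi> (Suc n) (Z v) * \<Delta>) (at v)"
        by (rule DERIV_chain2[OF gR_deriv[OF k pm pb zv] dZ])
      then have "((\<lambda>v. \<Delta>^n * gR \<kappa> \<psi> n (Z v) / Gamma \<kappa>) has_real_derivative \<Delta>^n * (gR \<kappa> \<psi> (Suc n) (Z v) * \<Delta>) / Gamma \<kappa>) (at v)"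
        by (intro DERIV_cdivide DERIV_cmult)
      then have "((deriv ^^ n) (q_psi \<kappa> L U \<psi>) has_real_derivative \<Delta>^n * (gR \<kappa> \<psi> (Suc n) (Z v) * \<Delta>) / Gamma \<kappa>) (at v)"
        by (rule has_field_derivative_transform_within_open[OF _ oV v]) (use Suc.IH in auto)
      then have "deriv ((deriv ^^ n) (q_psi \<kappa> L U \<psi>)) v = \<Delta>^n * (gR \<kappa> \<psi> (Suc n) (Z v) * \<Delta>) / Gamma \<kappa>"
        by (rule DERIV_imp_deriv)
      then show "(deriv ^^ Suc n) (q_psi \<kappa> L U \<psi>) v = \<Delta>^Suc n * gR \<kappa> \<psi> (Suc n) (Z v) / Gamma \<kappa>"
        by (simp add: ac_simps)
    qed
  qed
  define z where "z = Z u"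
  have za: "a \<le> z" "z \<le> b"
  proof -
    have "-1 \<le> u" "u \<le> 1" using u by auto
    then have "\<Delta> * (-1) \<le> \<Delta> * u" "\<Delta> * u \<le> \<Delta> * 1" using D0 by (intro mult_left_mono; simp)+
    moreover have "z0 - \<Delta> = a" "z0 + \<Delta> = b" by (simp_all add: z0_def D_def field_simps)
    ultimately show "a \<le> z" "z \<le> b" unfolding z_def Z_def by linarith+
  qed
  have z0': "0 < z" "z < 1" using za a0 b1 by auto
  have uV: "u \<in> V" using z0' by (simp add: V_def z_def)
  have Gk: "Gamma \<kappa> > 0" using k by (rule Gamma_real_pos)
  have kn: "\<kappa> \<notin> \<int>\<^sub>\<le>\<^sub>0" using k nonpos_Ints_nonpos by fastforce
  have GG: "Gamma (real r + \<kappa>) / Gamma \<kappa> = pochhammer \<kappa> r"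
    using pochhammer_Gamma[OF kn, of r] by (simp add: add.commute)
  have P0: "pochhammer \<kappa> r > 0" using pochhammer_pos[OF k] .
  have lhs: "\<bar>(deriv ^^ r) (q_psi \<kappa> L U \<psi>) u\<bar> = \<Delta>^r * \<bar>gR \<kappa> \<psi> r z\<bar> / Gamma \<kappa>"
    using key[of r] uV D0 Gk by (simp add: z_def abs_mult abs_divide)
  also have "\<dots> \<le> \<Delta>^r * (Gamma \<kappa> * pochhammer \<kappa> r * z powr (- real r) * (1-z) powr (-\<kappa>) * (1 + 1/(1-z))^r) / Gamma \<kappa>"
    using gR_bound[OF k pm pb z0', of r] D0 Gk by (intro divide_right_mono mult_left_mono) auto
  also have "\<dots> = pochhammer \<kappa> r * (1-z) powr (-\<kappa>) * (\<Delta> * (1/z) * (1 + 1/(1-z)))^r"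
    using Gk z0' by (simp add: powr_minus powr_realpow power_mult_distrib divide_inverse power_inverse)
  also have "\<dots> \<le> pochhammer \<kappa> r * (a powr (- \<kappa>) * L powr (- \<kappa>)) * A^r"
  proof (intro mult_mono mult_left_mono power_mono)
    have aL: "a * L \<le> 1 - z"
    proof -
      have "a * L = L / (1 + U)" by (simp add: a_def)
      also have "\<dots> \<le> L / (1 + L)" using L LU by (intro divide_left_mono) auto
      also have "\<dots> = 1 - b" using L by (simp add: b_def field_simps)
      finally show ?thesis using za by simp
    qed
    have "(1-z) powr (-\<kappa>) \<le> (a * L) powr (-\<kappa>)"
      by (rule powr_mono2') (use k a0 L aL in auto)
    then show "(1-z) powr (-\<kappa>) \<le> a powr (- \<kappa>) * L powr (- \<kappa>)"
      using a0 L by (simp add: powr_mult)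
    have iz: "1/z \<le> 1/a" using za a0 by (intro divide_left_mono) auto
    have i1z: "1/(1-z) \<le> 1/(a*L)" using aL a0 L z0' by (intro divide_left_mono) (auto intro!: mult_pos_pos)
    have "\<Delta> * (1/z) * (1 + 1/(1-z)) \<le> \<Delta> * (1/a) * (1 + 1/(a*L))"
      using iz i1z D0 z0' a0 L by (intro mult_mono mult_left_mono) auto
    then show "\<Delta> * (1/z) * (1 + 1/(1-z)) \<le> A" by (simp add: A_def)
    show "0 \<le> \<Delta> * (1/z) * (1 + 1/(1-z))" using D0 z0' by auto
  qed (use P0 z0' D0 in auto)
  also have "\<dots> = a powr (- \<kappa>) * L powr (- \<kappa>) * A ^ r * Gamma (real r + \<kappa>) / Gamma \<kappa>"
    unfolding GG[symmetric] using Gk by (simp add: field_simps)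
  finally show ?thesis .
qed

theorem lemmaD5:
  fixes \<kappa> L U :: real and \<psi> :: "real \<Rightarrow> real"
  assumes "\<kappa> > 0" and "0 < L" and "L < U"
    and "set_borel_measurable lborel {0..} \<psi>"
    and "\<forall>\<theta>\<ge>0. \<bar>\<psi> \<theta>\<bar> \<le> 1"
  shows "\<forall>r::nat. \<forall>u\<in>{-1..1::real}.
    (let a = 1 / (1 + U); b = 1 / (1 + L); \<Delta> = (b - a) / 2;
         A = \<Delta> / a * (1 + 1 / (a * L))
     in \<bar>(deriv ^^ r) (q_psi \<kappa> L U \<psi>) u\<bar>
          \<le> a powr (- \<kappa>) * L powr (- \<kappa>) * A ^ r * Gamma (real r + \<kappa>) / Gamma \<kappa>)"
proof (intro allI ballI)
  fix r :: nat and u :: real assume u: "u \<in> {-1..1}"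
  show "let a = 1 / (1 + U); b = 1 / (1 + L); \<Delta> = (b - a) / 2;
         A = \<Delta> / a * (1 + 1 / (a * L))
     in \<bar>(deriv ^^ r) (q_psi \<kappa> L U \<psi>) u\<bar>
          \<le> a powr (- \<kappa>) * L powr (- \<kappa>) * A ^ r * Gamma (real r + \<kappa>) / Gamma \<kappa>"
    unfolding Let_def by (rule main_aux[OF assms u refl refl refl refl])
qed

end
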